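(* Fix an instance and a feasible schedule $S$ (e.g. an optimum schedule) with $|S|$ scheduled jobs. With respect to the random hierarchical decomposition (random offset $r_0$ uniform in $[0,T/q]$), the expected number of jobs of $S$ that are position-crossing is at most $\frac{1}{q}|S|=O(\varepsilon^2|S|)$.
   Context: Jobs $j$ have integer release time $r_j$, deadline $d_j$ and processing time $p_j$ in $[0,T]$. Fix $\varepsilon>0$ with $q=1/\varepsilon^2$ an integer, $k=\log_q T$ (assume $T$ is a power of $q$), and $\ell_i=T/q^{i+1}$ for $i\ge0$. Random hierarchical decomposition: pick $r_0$ uniformly at random in $[0,T/q]$; for each $0\le i\le k$, the partition $I_i$ of $[0,T]$ consists of the intervals between consecutive points of $\{0,T\}\cup(\{r_0+s\ell_i:s\in\mathbb{Z}\}\cap(0,T))$. In a schedule, a job $j$ occupies its position, the interval $[s_j,s_j+p_j]$ where $s_j$ is its start time. A scheduled job $j$ is position-crossing if $\ell_i\le p_j<\ell_{i-1}$ for some $2\le i\le k+1$ and its position intersects (in a set of positive length) more than one interval of $I_{i-2}$. *)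

theory Defs
  imports "HOL-Probability.Probability"
begin

definition ell :: "nat \<Rightarrow> nat \<Rightarrow> nat \<Rightarrow> real" where
  "ell T q i = real T / real q ^ (i + 1)"

definition grid_points :: "nat \<Rightarrow> nat \<Rightarrow> real \<Rightarrow> nat \<Rightarrow> real set" where
  "grid_points T q r0 i =
     {0, real T} \<union> ({x. \<exists>s::int. x = r0 + of_int s * ell T q i} \<inter> {0<..<real T})"

definition partition_level :: "nat \<Rightarrow> nat \<Rightarrow> real \<Rightarrow> nat \<Rightarrow> real set set" where
  "partition_level T q r0 i =
     {{a..b} | a b. a \<in> grid_points T q r0 i \<and> b \<in> grid_points T q r0 i \<and> a < b \<and>
                    (\<forall>x\<in>grid_points T q r0 i. \<not> (a < x \<and> x < b))}"

definition position :: "('j \<Rightarrow> real) \<Rightarrow> ('j \<Rightarrow> int) \<Rightarrow> 'j \<Rightarrow> real set" where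
  "position s p j = {s j .. s j + of_int (p j)}"

definition position_crossing ::
  "nat \<Rightarrow> nat \<Rightarrow> nat \<Rightarrow> real \<Rightarrow> ('j \<Rightarrow> real) \<Rightarrow> ('j \<Rightarrow> int) \<Rightarrow> 'j \<Rightarrow> bool" where
  "position_crossing T q k r0 s p j \<longleftrightarrow>
     (\<exists>i. 2 \<le> i \<and> i \<le> k + 1 \<and> ell T q i \<le> of_int (p j) \<and> of_int (p j) < ell T q (i - 1) \<and>
        (\<exists>A\<in>partition_level T q r0 (i - 2). \<exists>B\<in>partition_level T q r0 (i - 2). A \<noteq> B \<and>
            measure lborel (position s p j \<inter> A) > 0 \<and> measure lborel (position s p j \<inter> B) > 0))"

definition valid_instance :: "nat \<Rightarrow> 'j set \<Rightarrow> ('j \<Rightarrow> int) \<Rightarrow> ('j \<Rightarrow> int) \<Rightarrow> ('j \<Rightarrow> int) \<Rightarrow> bool" where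
  "valid_instance T J r d p \<longleftrightarrow> finite J \<and>
     (\<forall>j\<in>J. 0 \<le> r j \<and> r j \<le> int T \<and> 0 \<le> d j \<and> d j \<le> int T \<and> 0 \<le> p j \<and> p j \<le> int T)"

definition feasible_schedule ::
  "nat \<Rightarrow> 'j set \<Rightarrow> ('j \<Rightarrow> int) \<Rightarrow> ('j \<Rightarrow> int) \<Rightarrow> ('j \<Rightarrow> int) \<Rightarrow> 'j set \<Rightarrow> ('j \<Rightarrow> nat) \<Rightarrow> ('j \<Rightarrow> real) \<Rightarrow> bool" where
  "feasible_schedule m J r d p S mach s \<longleftrightarrow> S \<subseteq> J \<and>
     (\<forall>j\<in>S. mach j < m \<and> of_int (r j) \<le> s j \<and> s j + of_int (p j) \<le> of_int (d j)) \<and>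
     (\<forall>j\<in>S. \<forall>j'\<in>S. j \<noteq> j' \<and> mach j = mach j' \<longrightarrow>
         s j + of_int (p j) \<le> s j' \<or> s j' + of_int (p j') \<le> s j)"

end

theory Submission imports Defs begin
lemma cover_bound:
  fixes L p a :: real and N :: nat
  assumes L: "L > 0" and N: "N \<ge> 1" and p: "0 < p" "p < L"
  shows "measure lborel ({x. \<exists>s::int. a < x + of_int s * L \<and> x + of_int s * L < a + p} \<inter> {0..real N * L})
          \<le> real N * p"
proof -
  define f where "f = \<lfloor>a / L\<rfloor>"
  define c where "c = a - of_int f * L"
  have c0: "0 \<le> c" and cL: "c < L"
  proof -
    have "of_int f \<le> a / L" "a / L < of_int f + 1" unfolding f_def by linarith+
    then have "of_int f * L \<le> a" "a < (of_int f + 1) * L" using L by (auto simp: field_simps)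
    then show "0 \<le> c" "c < L" unfolding c_def by (auto simp: algebra_simps)
  qed
  define W where "W = {0..max 0 (c+p-L)}"
  define I where "I = (\<lambda>t::nat. {c + real t * L .. c + real t * L + p})"
  define Z where "Z = {c + real (N-1) * L .. c + real (N-1) * L + min p (L - c)}"
  let ?E = "{x. \<exists>s::int. a < x + of_int s * L \<and> x + of_int s * L < a + p} \<inter> {0..real N * L}"
  have sub: "?E \<subseteq> W \<union> (\<Union>t\<in>{..<N-1}. I t) \<union> Z"
  proof
    fix x assume "x \<in> ?E"
    then obtain s :: int where s: "a < x + of_int s * L" "x + of_int s * L < a + p"
      and x: "0 \<le> x" "x \<le> real N * L" by auto
    define t where "t = f - s"
    have a_eq: "a = c + of_int f * L" unfolding c_def by simp
    have t1: "c + of_int t * L < x" "x < c + of_int t * L + p"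
      using s unfolding a_eq t_def by (auto simp: algebra_simps)
    have "of_int t * L > -2 * L" using t1 x c0 cL p by linarith
    then have "real_of_int t > -2" using mult_less_cancel_right_pos[OF L, of "-2" "of_int t"] by simp
    then have tge: "t \<ge> -1" by linarith
    have "of_int t * L < real N * L" using t1 x c0 by linarith
    then have "real_of_int t < real N" using mult_less_cancel_right_pos[OF L, of "of_int t" "real N"] by simp
    then have tle: "t \<le> int N - 1" by linarith
    consider "t = -1" | "t = int N - 1" | "0 \<le> t \<and> t < int N - 1" using tge tle by linarith
    then show "x \<in> W \<union> (\<Union>t\<in>{..<N-1}. I t) \<union> Z"
    proof cases
      case 1
      then have "x \<in> W" using t1 x unfolding W_def by auto
      then show ?thesis by blast
    next
      case 2
      then have "real_of_int t = real (N - 1)" using N by (simp add: of_nat_diff)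
      have NL1: "real N * L = real (N-1) * L + L" using N by (simp add: of_nat_diff algebra_simps)
      have h0: "c + real (N-1) * L \<le> x" using t1 \<open>real_of_int t = real (N - 1)\<close> by simp
      have h1: "x \<le> c + real (N-1) * L + p" using t1 \<open>real_of_int t = real (N - 1)\<close> by simp
      have h2: "x \<le> c + real (N-1) * L + (L - c)" using x NL1 by simp
      have "x \<in> Z" using h0 h1 h2 unfolding Z_def by (auto simp: min_def)
      then show ?thesis by blast
    next
      case 3
      then have "nat t \<in> {..<N-1}" by auto
      moreover have "real (nat t) = of_int t" using 3 by simp
      ultimately have "x \<in> (\<Union>t\<in>{..<N-1}. I t)" using t1 unfolding I_def
        by (intro UN_I[of "nat t"]) auto
      then show ?thesis by blast
    qed
  qed
  have "measure lborel ?E \<le> measure lborel (W \<union> (\<Union>t\<in>{..<N-1}. I t) \<union> Z)"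
    by (rule measure_mono_fmeasurable[OF sub]) (auto simp: W_def I_def Z_def intro!: fmeasurable_compact)
  also have "\<dots> \<le> measure lborel (W \<union> (\<Union>t\<in>{..<N-1}. I t)) + measure lborel Z"
    by (rule measure_Un_le) (auto simp: W_def I_def Z_def)
  also have "\<dots> \<le> measure lborel W + measure lborel (\<Union>t\<in>{..<N-1}. I t) + measure lborel Z"
    using measure_Un_le[of W lborel "\<Union>t\<in>{..<N-1}. I t"] by (auto simp: W_def I_def)
  also have "measure lborel (\<Union>t\<in>{..<N-1}. I t) \<le> (\<Sum>t\<in>{..<N-1}. measure lborel (I t))"
    by (rule measure_UNION_le) (auto simp: I_def)
  also have "(\<Sum>t\<in>{..<N-1}. measure lborel (I t)) = real (N-1) * p"
    using p by (simp add: I_def)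
  also have "measure lborel W = max 0 (c+p-L)" by (simp add: W_def)
  also have "measure lborel Z = min p (L - c)" using p cL by (simp add: Z_def)
  also have "max 0 (c+p-L) + real (N-1) * p + min p (L - c) = real N * p"
    using N by (auto simp: of_nat_diff algebra_simps max_def min_def)
  finally show ?thesis by simp
qed
lemma meas_int_pos:
  fixes a b c d :: real
  shows "measure lborel ({a..b} \<inter> {c..d}) > 0 \<longleftrightarrow> max a c < min b d"
proof -
  have e: "{a..b} \<inter> {c..d} = {max a c..min b d}" by auto
  show ?thesis unfolding e
    by (cases "max a c \<le> min b d") auto
qed

lemma char_cross:
  fixes a b r0 :: real and T q i :: nat
  defines "L \<equiv> ell T q i"
  defines "G \<equiv> grid_points T q r0 i"
  assumes L: "L > 0" and ab: "0 \<le> a" "a < b" "b \<le> real T"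
  shows "(\<exists>A\<in>partition_level T q r0 i. \<exists>B\<in>partition_level T q r0 i. A \<noteq> B \<and>
            measure lborel ({a..b} \<inter> A) > 0 \<and> measure lborel ({a..b} \<inter> B) > 0)
     \<longleftrightarrow> (\<exists>s::int. a < r0 + of_int s * L \<and> r0 + of_int s * L < b)"
proof
  assume "\<exists>A\<in>partition_level T q r0 i. \<exists>B\<in>partition_level T q r0 i. A \<noteq> B \<and>
            measure lborel ({a..b} \<inter> A) > 0 \<and> measure lborel ({a..b} \<inter> B) > 0"
  then obtain A B where AB: "A \<in> partition_level T q r0 i" "B \<in> partition_level T q r0 i" "A \<noteq> B"
     "measure lborel ({a..b} \<inter> A) > 0" "measure lborel ({a..b} \<inter> B) > 0" by blast
  from AB(1) obtain a1 b1 where A: "A = {a1..b1}" "a1 \<in> G" "b1 \<in> G" "a1 < b1" "\<forall>x\<in>G. \<not> (a1 < x \<and> x < b1)"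
    unfolding partition_level_def G_def by blast
  from AB(2) obtain a2 b2 where B: "B = {a2..b2}" "a2 \<in> G" "b2 \<in> G" "a2 < b2" "\<forall>x\<in>G. \<not> (a2 < x \<and> x < b2)"
    unfolding partition_level_def G_def by blast
  have ne: "a1 \<noteq> a2 \<or> b1 \<noteq> b2" using AB(3) A(1) B(1) by auto
  have m1: "max a a1 < min b b1" using AB(4) A(1) meas_int_pos by simp
  have m2: "max a a2 < min b b2" using AB(5) B(1) meas_int_pos by simp
  have "\<exists>x\<in>G. a < x \<and> x < b"
  proof (cases a1 a2 rule: linorder_cases)
    case less
    have "\<not> (a1 < a2 \<and> a2 < b1)" using A(5) B(2) by blast
    then have "b1 \<le> a2" using less by linarith
    then show ?thesis using A(3) m1 m2 by (intro bexI[of _ b1]) auto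
  next
    case equal
    have "\<not> (a2 < b1 \<and> b1 < b2)" using A(3) B(5) by blast
    moreover have "\<not> (a1 < b2 \<and> b2 < b1)" using A(5) B(3) by blast
    ultimately have False using ne equal A(4) B(4) by linarith
    then show ?thesis ..
  next
    case greater
    have "\<not> (a2 < a1 \<and> a1 < b2)" using B(5) A(2) by blast
    then have "b2 \<le> a1" using greater by linarith
    then show ?thesis using B(3) m1 m2 by (intro bexI[of _ b2]) auto
  qed
  then obtain x where x: "x \<in> G" "a < x" "x < b" by blast
  then have "0 < x" "x < real T" using ab by auto
  with x show "\<exists>s::int. a < r0 + of_int s * L \<and> r0 + of_int s * L < b"
    unfolding G_def grid_points_def L_def by auto
next
  assume "\<exists>s::int. a < r0 + of_int s * L \<and> r0 + of_int s * L < b"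
  then obtain s0 :: int where s0: "a < r0 + of_int s0 * L" "r0 + of_int s0 * L < b" by blast
  define g where "g = r0 + of_int s0 * L"
  define pr where "pr = max 0 (r0 + of_int (s0 - 1) * L)"
  define su where "su = min (real T) (r0 + of_int (s0 + 1) * L)"
  have g: "0 < g" "g < real T" "a < g" "g < b" using s0 ab unfolding g_def by auto
  have gG: "g \<in> G" using g unfolding G_def grid_points_def L_def g_def by auto
  have prg: "pr < g" using g L unfolding pr_def g_def by (auto simp: algebra_simps)
  have gsu: "g < su" using g L unfolding su_def g_def by (auto simp: algebra_simps)
  have prG: "pr \<in> G"
  proof (cases "r0 + of_int (s0 - 1) * L > 0")
    case True
    have ex: "\<exists>s'::int. r0 + of_int (s0 - 1) * L = r0 + of_int s' * L" by blast
    have "r0 + of_int (s0 - 1) * L \<in> G" using True prg g ex unfolding pr_def G_def grid_points_def L_def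
      by (simp only: Un_iff Int_iff mem_Collect_eq greaterThanLessThan_iff) simp
    then show ?thesis using True unfolding pr_def by simp
  next
    case False
    then show ?thesis unfolding pr_def G_def grid_points_def by auto
  qed
  have suG: "su \<in> G"
  proof (cases "r0 + of_int (s0 + 1) * L < real T")
    case True
    have ex: "\<exists>s'::int. r0 + of_int (s0 + 1) * L = r0 + of_int s' * L" by blast
    have "r0 + of_int (s0 + 1) * L \<in> G" using True gsu g ex unfolding su_def G_def grid_points_def L_def
      by (simp only: Un_iff Int_iff mem_Collect_eq greaterThanLessThan_iff) simp
    then show ?thesis using True unfolding su_def by simp
  next
    case False
    then show ?thesis unfolding su_def G_def grid_points_def by auto
  qed
  have gap: "\<not> (u < x \<and> x < v)" if x: "x = r0 + of_int s * L" and
      uv: "u = r0 + of_int (s0 - 1) * L \<and> v = g \<or> u = g \<and> v = r0 + of_int (s0 + 1) * L" for x u v s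
  proof
    assume h: "u < x \<and> x < v"
    from uv show False
    proof
      assume "u = r0 + of_int (s0 - 1) * L \<and> v = g"
      then have "of_int (s0 - 1) * L < of_int s * L" "of_int s * L < of_int s0 * L"
        using h x unfolding g_def by auto
      then have "real_of_int (s0 - 1) < of_int s" "real_of_int s < of_int s0" using L by auto
      then have "s0 - 1 < s" "s < s0" by (simp_all only: of_int_less_iff)
      then show False by linarith
    next
      assume "u = g \<and> v = r0 + of_int (s0 + 1) * L"
      then have "of_int s0 * L < of_int s * L" "of_int s * L < of_int (s0+1) * L"
        using h x unfolding g_def by auto
      then have "real_of_int s0 < of_int s" "real_of_int s < of_int (s0+1)" using L by auto
      then have "s0 < s" "s < s0 + 1" by (simp_all only: of_int_less_iff)
      then show False by linarith
    qed
  qed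
  have A: "{pr..g} \<in> partition_level T q r0 i"
    unfolding partition_level_def
  proof (intro CollectI exI conjI)
    show "{pr..g} = {pr..g}" by simp
    show "pr \<in> grid_points T q r0 i" "g \<in> grid_points T q r0 i" using prG gG G_def by auto
    show "pr < g" by fact
    show "\<forall>x\<in>grid_points T q r0 i. \<not> (pr < x \<and> x < g)"
    proof
      fix x assume "x \<in> grid_points T q r0 i"
      then consider "x = 0" | "x = real T" | s where "x = r0 + of_int s * L"
        unfolding grid_points_def L_def by auto
      then show "\<not> (pr < x \<and> x < g)"
      proof cases
        case 1 then show ?thesis unfolding pr_def by auto
      next
        case 2 then show ?thesis using g by auto
      next
        case 3
        then show ?thesis using gap[OF 3, of "r0 + of_int (s0 - 1) * L" g] unfolding pr_def by auto
      qed
    qed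
  qed
  have B: "{g..su} \<in> partition_level T q r0 i"
    unfolding partition_level_def
  proof (intro CollectI exI conjI)
    show "{g..su} = {g..su}" by simp
    show "su \<in> grid_points T q r0 i" "g \<in> grid_points T q r0 i" using suG gG G_def by auto
    show "g < su" by fact
    show "\<forall>x\<in>grid_points T q r0 i. \<not> (g < x \<and> x < su)"
    proof
      fix x assume "x \<in> grid_points T q r0 i"
      then consider "x = 0" | "x = real T" | s where "x = r0 + of_int s * L"
        unfolding grid_points_def L_def by auto
      then show "\<not> (g < x \<and> x < su)"
      proof cases
        case 1 then show ?thesis using g by auto
      next
        case 2 then show ?thesis unfolding su_def by auto
      next
        case 3
        then show ?thesis using gap[OF 3, of g "r0 + of_int (s0 + 1) * L"] unfolding su_def by auto
      qed
    qed
  qed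
  have "{pr..g} \<noteq> {g..su}" using prg gsu by auto
  moreover have "measure lborel ({a..b} \<inter> {pr..g}) > 0" unfolding meas_int_pos using g prg by auto
  moreover have "measure lborel ({a..b} \<inter> {g..su}) > 0" unfolding meas_int_pos using g gsu by auto
  ultimately show "\<exists>A\<in>partition_level T q r0 i. \<exists>B\<in>partition_level T q r0 i. A \<noteq> B \<and>
            measure lborel ({a..b} \<inter> A) > 0 \<and> measure lborel ({a..b} \<inter> B) > 0"
    using A B by blast
qed

lemma ell_pos: "T > 0 \<Longrightarrow> q > 0 \<Longrightarrow> ell T q i > 0"
  by (simp add: ell_def)

lemma ell_Suc: "ell T q (Suc i) = ell T q i / real q"
  by (simp add: ell_def field_simps)

lemma ell_strict: assumes "T > 0" "q \<ge> 2" "i < i'" shows "ell T q i' < ell T q i"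
  using assms(3)
proof (induction i' rule: less_induct)
  case (less i')
  then obtain m where m: "i' = Suc m" by (cases i') auto
  have pos: "ell T q m > 0" using assms by (intro ell_pos) auto
  have "ell T q i' < ell T q m" unfolding m ell_Suc using pos assms(2)
    by (simp add: divide_less_eq)
  moreover have "ell T q m \<le> ell T q i"
  proof (cases "i < m")
    case True then show ?thesis using less.IH[of m] m by (auto intro: less_imp_le)
  next
    case False then have "i = m" using less.prems m by simp
    then show ?thesis by simp
  qed
  ultimately show ?case by simp
qed

lemma ell_mult: "q > 0 \<Longrightarrow> real q ^ n * ell T q (n + m) = ell T q m"
  by (simp add: ell_def power_add field_simps)

lemma open_conj_const: "open {x. Q x} \<Longrightarrow> open {x::real. c \<and> Q x}"
  by (cases c) auto
theorem mainTheorem7: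
  fixes \<epsilon> :: real and q k T m :: nat
    and J :: "'j set" and r d p :: "'j \<Rightarrow> int"
    and S :: "'j set" and mach :: "'j \<Rightarrow> nat" and s :: "'j \<Rightarrow> real"
  assumes "\<epsilon> > 0" and "real q = 1 / \<epsilon>\<^sup>2" and "T = q ^ k"
    and "valid_instance T J r d p"
    and "feasible_schedule m J r d p S mach s"
  shows "integrable (uniform_measure lborel {0 .. real T / real q})
           (\<lambda>r0. real (card {j \<in> S. position_crossing T q k r0 s p j}))
       \<and> (\<integral>r0. real (card {j \<in> S. position_crossing T q k r0 s p j})
             \<partial>uniform_measure lborel {0 .. real T / real q})
         \<le> real (card S) / real q"
proof -
  have "real q > 0" using assms(1,2) by simp
  then have q0: "q > 0" by simp
  have T0: "T > 0" using assms(3) q0 by simp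
  have finJ: "finite J" using assms(4) unfolding valid_instance_def by simp
  have SJ: "S \<subseteq> J" using assms(5) unfolding feasible_schedule_def by simp
  have fin: "finite S" using finJ SJ by (rule finite_subset[rotated])
  have job: "0 \<le> s j \<and> s j + of_int (p j) \<le> real T" if "j \<in> S" for j
  proof -
    have jJ: "j \<in> J" using that SJ by auto
    have h1: "of_int (r j) \<le> s j" "s j + of_int (p j) \<le> of_int (d j)"
      using assms(5) that unfolding feasible_schedule_def by auto
    have h2: "0 \<le> r j" "d j \<le> int T" using assms(4) jJ unfolding valid_instance_def by auto
    have "(0::real) \<le> of_int (r j)" using h2 by simp
    moreover have "real_of_int (d j) \<le> real T" using h2 by (metis of_int_le_iff of_int_of_nat_eq)
    ultimately show ?thesis using h1 by linarith
  qed
  define P where "P j r0 \<longleftrightarrow> (\<exists>i. 2 \<le> i \<and> i \<le> k + 1 \<and> ell T q i \<le> of_int (p j) \<and> of_int (p j) < ell T q (i - 1) \<and>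
      (\<exists>s'::int. s j < r0 + of_int s' * ell T q (i-2) \<and> r0 + of_int s' * ell T q (i-2) < s j + of_int (p j)))"
    for j r0
  have eqv: "position_crossing T q k r0 s p j \<longleftrightarrow> P j r0" if j: "j \<in> S" for j r0
    unfolding position_crossing_def position_def P_def
  proof (intro ex_cong1 conj_cong refl)
    fix i assume i: "ell T q i \<le> of_int (p j)"
    have "ell T q i > 0" using T0 q0 by (rule ell_pos)
    then have "s j < s j + of_int (p j)" using i by simp
    then show "(\<exists>A\<in>partition_level T q r0 (i - 2). \<exists>B\<in>partition_level T q r0 (i - 2). A \<noteq> B \<and>
            0 < measure lborel ({s j..s j + real_of_int (p j)} \<inter> A) \<and> 0 < measure lborel ({s j..s j + real_of_int (p j)} \<inter> B))
        = (\<exists>s'::int. s j < r0 + of_int s' * ell T q (i-2) \<and> r0 + of_int s' * ell T q (i-2) < s j + of_int (p j))"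
      using char_cross[of T q "i-2" "s j" "s j + of_int (p j)" r0] job[OF j] ell_pos[OF T0 q0] by auto
  qed
  define C where "C j = {r0. P j r0}" for j
  have card_eq: "real (card {j \<in> S. position_crossing T q k r0 s p j}) = (\<Sum>j\<in>S. indicator (C j) r0)" for r0
  proof -
    have "{j \<in> S. position_crossing T q k r0 s p j} = {j \<in> S. r0 \<in> C j}" using eqv C_def by auto
    then have "real (card {j \<in> S. position_crossing T q k r0 s p j}) = (\<Sum>j\<in>{j \<in> S. r0 \<in> C j}. 1)"
      by simp
    also have "\<dots> = (\<Sum>j\<in>S. indicator (C j) r0)"
      by (subst sum.inter_filter[OF fin]) (simp add: indicator_def of_bool_def)
    finally show ?thesis .
  qed
  have openC: "open (C j)" for j
    unfolding C_def P_def
    apply (intro open_Collect_ex open_conj_const open_Collect_conj)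
    apply (rule open_Collect_less, (intro continuous_intros)+)+
    done
  then have setsC: "C j \<in> sets borel" for j by auto
  define l0 where "l0 = real T / real q"
  have l0: "l0 > 0" using T0 q0 unfolding l0_def by simp
  have l0e: "l0 = ell T q 0" unfolding l0_def ell_def by simp
  define M where "M = uniform_measure lborel {0..l0}"
  have em: "emeasure lborel {0..l0} = ennreal l0" using l0 by simp
  have prob: "prob_space M" unfolding M_def
    by (rule prob_space_uniform_measure) (use em l0 in auto)
  have setsM: "C j \<in> sets M" for j using setsC unfolding M_def by simp
  have intC: "integrable M (indicator (C j) :: real \<Rightarrow> real)" for j
    using setsM finite_measure.emeasure_finite[OF prob_space.finite_measure[OF prob]] by (auto simp: less_top)
  have measC: "measure M (C j) = measure lborel ({0..l0} \<inter> C j) / l0" for j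
    unfolding M_def using em l0 setsC by (subst measure_uniform_measure) auto
  have bound: "measure lborel ({0..l0} \<inter> C j) \<le> l0 / real q" if j: "j \<in> S" for j
  proof (cases "\<exists>i. 2 \<le> i \<and> i \<le> k + 1 \<and> ell T q i \<le> of_int (p j) \<and> of_int (p j) < ell T q (i - 1)")
    case False
    then have "C j = {}" unfolding C_def P_def by auto
    then show ?thesis using l0 q0 by simp
  next
    case True
    then obtain i0 where i0: "2 \<le> i0" "ell T q i0 \<le> of_int (p j)" "of_int (p j) < ell T q (i0 - 1)"
      by blast
    have q2: "q \<ge> 2"
    proof (rule ccontr)
      assume "\<not> q \<ge> 2"
      then have "q = 1" using q0 by simp
      then have "ell T q (Suc (i0 - 1)) = ell T q (i0 - 1)" by (simp add: ell_Suc)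
      then show False using i0 by simp
    qed
    have anti: "ell T q b \<le> ell T q a" if "a \<le> b" for a b
      using ell_strict[OF T0 q2, of a b] that by (cases "a = b") auto
    have uniq: "i = i0" if "2 \<le> i" "ell T q i \<le> of_int (p j)" "of_int (p j) < ell T q (i - 1)" for i
    proof (rule ccontr)
      assume "i \<noteq> i0"
      then have "i < i0 \<or> i0 < i" by auto
      then show False
      proof
        assume "i < i0" then have "ell T q (i0 - 1) \<le> ell T q i" by (intro anti) simp
        then show False using that i0 by simp
      next
        assume "i0 < i" then have "ell T q (i - 1) \<le> ell T q i0" by (intro anti) simp
        then show False using that i0 by simp
      qed
    qed
    define L where "L = ell T q (i0 - 2)"
    define N where "N = q ^ (i0 - 2)"
    have Lpos: "L > 0" unfolding L_def using T0 q0 by (rule ell_pos)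
    have N1: "N \<ge> 1" unfolding N_def using q0 by simp
    have NL: "real N * L = l0" unfolding N_def L_def l0e using ell_mult[OF q0, of "i0-2" T 0] by simp
    have pos: "0 < real_of_int (p j)" using i0 ell_pos[OF T0 q0, of i0] by simp
    have i0e: "i0 - 1 = Suc (i0 - 2)" using i0(1) by simp
    have Lsuc: "ell T q (i0 - 1) = L / real q" unfolding L_def i0e by (rule ell_Suc)
    have "L * 1 \<le> L * real q" using Lpos q2 by (intro mult_left_mono) auto
    then have "L / real q \<le> L" using q0 by (simp add: divide_le_eq)
    then have pL: "real_of_int (p j) < L" using i0(3) Lsuc by linarith
    let ?E = "{x. \<exists>s'::int. s j < x + of_int s' * L \<and> x + of_int s' * L < s j + of_int (p j)} \<inter> {0..real N * L}"
    have subE: "{0..l0} \<inter> C j \<subseteq> ?E"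
    proof
      fix x assume "x \<in> {0..l0} \<inter> C j"
      then obtain i s' where "2 \<le> i" "ell T q i \<le> of_int (p j)" "of_int (p j) < ell T q (i - 1)"
        "s j < x + of_int s' * ell T q (i-2)" "x + of_int s' * ell T q (i-2) < s j + of_int (p j)"
        and x: "x \<in> {0..l0}"
        unfolding C_def P_def by auto
      moreover then have "i = i0" using uniq by blast
      ultimately show "x \<in> ?E" using NL unfolding L_def by auto
    qed
    have openE: "open {x. \<exists>s'::int. s j < x + of_int s' * L \<and> x + of_int s' * L < s j + of_int (p j)}"
      apply (intro open_Collect_ex open_Collect_conj)
      apply (rule open_Collect_less, (intro continuous_intros)+)+
      done
    have Ef: "?E \<in> fmeasurable lborel"
      by (subst Int_commute, rule fmeasurable_Int_fmeasurable)
        (auto intro!: fmeasurable_compact borel_open[OF openE])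
    have "measure lborel ({0..l0} \<inter> C j) \<le> measure lborel ?E"
      by (rule measure_mono_fmeasurable[OF subE]) (use setsC Ef in auto)
    also have "\<dots> \<le> real N * of_int (p j)"
      by (rule cover_bound[OF Lpos N1 pos pL])
    also have "\<dots> \<le> real N * (L / real q)"
      using i0(3) Lsuc N1 by (intro mult_left_mono) auto
    also have "\<dots> = l0 / real q" using NL by simp
    finally show ?thesis .
  qed
  have intg: "integrable M (\<lambda>r0. real (card {j \<in> S. position_crossing T q k r0 s p j}))"
    unfolding card_eq by (rule Bochner_Integration.integrable_sum) (rule intC)
  have "(\<integral>r0. real (card {j \<in> S. position_crossing T q k r0 s p j}) \<partial>M)
      = (\<Sum>j\<in>S. measure M (C j))"
    unfolding card_eq
    by (subst Bochner_Integration.integral_sum[OF intC]) (simp add: M_def)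
  also have "\<dots> \<le> (\<Sum>j\<in>S. 1 / real q)"
  proof (rule sum_mono)
    fix j assume "j \<in> S"
    then have "measure lborel ({0..l0} \<inter> C j) / l0 \<le> (l0 / real q) / l0"
      using bound l0 by (intro divide_right_mono) auto
    then show "measure M (C j) \<le> 1 / real q" using l0 by (simp add: measC)
  qed
  also have "\<dots> = real (card S) / real q" by simp
  finally show ?thesis using intg unfolding M_def l0_def by simp
qed
end
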